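(* Let $p$ be a prime and $n, k$ positive integers, $d = \gcd(n,k)$, and suppose $p \nmid \frac{k}{d}$. Let $L(X) = \sum_{i=0}^t \alpha_i X^{p^i}$, $\alpha_i \in \mathbb{F}_p$, be a $p$-linearized polynomial without multiple roots, and let $L'$ be a $p$-linearized polynomial over $\mathbb{F}_p$ with $X - X^{p^k} = L \circ L'(X)$. Let $a \in \mathbb{F}_{p^n}$ and let $\delta$ be any element of $\mathbb{F}_{p^{2n}}$ with $S_n^{2n}(\delta) = 1$. Then the equation $L(X) = a$ has a solution in $\mathbb{F}_{p^n}$ if and only if $L' \circ T_d^n(a) = 0$. Moreover, $$x_0 = \frac{d}{k} \cdot L' \circ T_k^{[n,k]}(\delta \cdot a)$$ is a solution of $L(X) = a$, and it belongs to $\mathbb{F}_{p^n}$ under the condition $L' \circ T_d^n(a) = 0$.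
   Context: For positive integers $l \mid m$ define $T_l^m(X) = \sum_{i=0}^{m/l - 1} X^{p^{li}}$ and $S_l^m(X) = \sum_{i=0}^{m/l-1} (-1)^i X^{p^{li}}$; in particular $S_n^{2n}(X) = X - X^{p^n}$. $[n,k]$ denotes the least common multiple of $n$ and $k$. Since $p \nmid k/d$, $\frac{d}{k}$ denotes the inverse of $\frac{k}{d}$ in $\mathbb{F}_p$. $\circ$ denotes composition. *)

theory Defs
  imports "HOL-Computational_Algebra.Polynomial"
begin

(* The subset {x. x^q = x} of the ambient field; for q = p^m in an algebraically
   closed field of characteristic p this is the finite field F_{p^m}. *)
definition Fq :: "nat \<Rightarrow> 'a::field set" where
  "Fq q = {x. x ^ q = x}"

definition alg_closed :: "'a::field itself \<Rightarrow> bool" where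
  "alg_closed _ \<longleftrightarrow> (\<forall>q::'a poly. 0 < degree q \<longrightarrow> (\<exists>x. poly q x = 0))"

definition p_linearized :: "nat \<Rightarrow> 'a::field poly \<Rightarrow> bool" where
  "p_linearized p L \<longleftrightarrow>
     (\<forall>i. coeff L i \<noteq> 0 \<longrightarrow> (\<exists>j. i = p ^ j) \<and> coeff L i \<in> Fq p)"

definition T :: "nat \<Rightarrow> nat \<Rightarrow> nat \<Rightarrow> 'a::field \<Rightarrow> 'a" where
  "T p l m x = (\<Sum>i<m div l. x ^ (p ^ (l * i)))"

definition S :: "nat \<Rightarrow> nat \<Rightarrow> nat \<Rightarrow> 'a::field \<Rightarrow> 'a" where
  "S p l m x = (\<Sum>i<m div l. (-1) ^ i * x ^ (p ^ (l * i)))"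

end

theory Submission
  imports Defs "HOL-Computational_Algebra.Primes" "HOL-Number_Theory.Cong"
begin

lemma frob_add:
  fixes x y :: "'a::field"
  assumes "CHAR('a) = p" "prime p"
  shows "(x + y) ^ (p ^ m) = x ^ (p ^ m) + y ^ (p ^ m)"
  using assms freshmans_dream'[of "p ^ m" m x y] by simp

lemma frob_diff:
  fixes x y :: "'a::field"
  assumes "CHAR('a) = p" "prime p"
  shows "(x - y) ^ (p ^ m) = x ^ (p ^ m) - y ^ (p ^ m)"
  using frob_add[OF assms, of "x - y" y m] by (simp add: algebra_simps)

lemma frob_sum:
  fixes f :: "'b \<Rightarrow> 'a::field"
  assumes "CHAR('a) = p" "prime p"
  shows "(sum f A) ^ (p ^ m) = (\<Sum>i\<in>A. f i ^ (p ^ m))"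
  using assms freshmans_dream_sum'[of "p ^ m" m f A] by simp

lemma frob_of_nat:
  assumes "CHAR('a::field) = p" "prime p"
  shows "(of_nat j :: 'a) ^ (p ^ m) = of_nat j"
proof -
  have "(of_nat j :: 'a) = (\<Sum>i<j. 1)" by simp
  then show ?thesis using frob_sum[OF assms, of "\<lambda>_. 1" "{..<j}" m] by simp
qed

lemma pow_fix:
  fixes c :: "'a::field"
  assumes "c ^ p = c"
  shows "c ^ (p ^ m) = c"
proof (induction m)
  case (Suc m)
  have "c ^ (p ^ Suc m) = (c ^ (p ^ m)) ^ p" by (metis power_Suc2 power_mult)
  then show ?case using Suc assms by simp
qed simp

lemma plin_coeff:
  assumes "p_linearized p L" "coeff L i \<noteq> 0"
  shows "\<exists>j. i = p ^ j" "coeff L i ^ p = coeff L i"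
  using assms unfolding p_linearized_def Fq_def by auto

lemma plin_coeff0:
  assumes "p_linearized p L" "prime p"
  shows "coeff L 0 = 0"
proof (rule ccontr)
  assume "coeff L 0 \<noteq> 0"
  then obtain j where "0 = p ^ j" using plin_coeff(1)[OF assms(1)] by blast
  then show False using assms(2) by (metis power_not_zero prime_gt_0_nat less_irrefl)
qed

lemma plin_zero:
  assumes "p_linearized p L" "prime p"
  shows "poly L 0 = 0"
  using plin_coeff0[OF assms] by (simp add: poly_0_coeff_0)

lemma plin_frob:
  fixes L :: "'a::field poly"
  assumes "CHAR('a) = p" "prime p" "p_linearized p L"
  shows "(poly L x) ^ (p ^ m) = poly L (x ^ (p ^ m))"
proof -
  have "(poly L x) ^ (p ^ m) = (\<Sum>i\<le>degree L. (coeff L i * x ^ i) ^ (p ^ m))"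
    by (simp add: poly_altdef frob_sum[OF assms(1,2)])
  also have "\<dots> = (\<Sum>i\<le>degree L. coeff L i * (x ^ (p ^ m)) ^ i)"
  proof (rule sum.cong[OF refl])
    fix i
    show "(coeff L i * x ^ i) ^ (p ^ m) = coeff L i * (x ^ (p ^ m)) ^ i"
    proof (cases "coeff L i = 0")
      case False
      then have "coeff L i ^ (p ^ m) = coeff L i"
        using plin_coeff(2)[OF assms(3)] pow_fix by blast
      then show ?thesis
        by (simp add: power_mult_distrib flip: power_mult) (simp add: mult.commute)
    next
      case True
      then show ?thesis using assms(2) by (simp add: prime_gt_0_nat)
    qed
  qed
  finally show ?thesis by (simp add: poly_altdef)
qed

lemma plin_add:
  fixes L :: "'a::field poly"
  assumes "CHAR('a) = p" "prime p" "p_linearized p L"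
  shows "poly L (x + y) = poly L x + poly L y"
proof -
  have "poly L (x + y) = (\<Sum>i\<le>degree L. coeff L i * x ^ i + coeff L i * y ^ i)"
    unfolding poly_altdef
  proof (rule sum.cong[OF refl])
    fix i
    show "coeff L i * (x + y) ^ i = coeff L i * x ^ i + coeff L i * y ^ i"
    proof (cases "coeff L i = 0")
      case False
      then obtain j where "i = p ^ j" using plin_coeff(1)[OF assms(3)] by blast
      then show ?thesis using frob_add[OF assms(1,2)] by (simp add: algebra_simps)
    qed simp
  qed
  then show ?thesis by (simp add: poly_altdef sum.distrib)
qed

lemma plin_diff:
  fixes L :: "'a::field poly"
  assumes "CHAR('a) = p" "prime p" "p_linearized p L"
  shows "poly L (x - y) = poly L x - poly L y"
  using plin_add[OF assms, of "x - y" y] by simp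

lemma plin_smult:
  fixes L :: "'a::field poly"
  assumes "CHAR('a) = p" "prime p" "p_linearized p L" "c ^ p = c"
  shows "poly L (c * x) = c * poly L x"
proof -
  have "poly L (c * x) = (\<Sum>i\<le>degree L. c * (coeff L i * x ^ i))"
    unfolding poly_altdef
  proof (rule sum.cong[OF refl])
    fix i
    show "coeff L i * (c * x) ^ i = c * (coeff L i * x ^ i)"
    proof (cases "coeff L i = 0")
      case False
      then obtain j where "i = p ^ j" using plin_coeff(1)[OF assms(3)] by blast
      then show ?thesis using pow_fix[OF assms(4)] by (simp add: power_mult_distrib)
    qed simp
  qed
  then show ?thesis by (simp add: poly_altdef sum_distrib_left)
qed

lemma plin_sum:
  fixes L :: "'a::field poly"
  assumes "CHAR('a) = p" "prime p" "p_linearized p L"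
  shows "poly L (sum f A) = (\<Sum>i\<in>A. poly L (f i))"
  by (induction A rule: infinite_finite_induct)
     (simp_all add: plin_zero[OF assms(3,2)] plin_add[OF assms])

lemma plin_double:
  fixes L L' :: "'a::field poly"
  assumes "CHAR('a) = p" "prime p" "p_linearized p L" "p_linearized p L'"
  shows "poly L (poly L' z) = (\<Sum>i\<le>degree L. \<Sum>j\<le>degree L'. coeff L i * coeff L' j * z ^ (i * j))"
  unfolding poly_altdef[of L]
proof (rule sum.cong[OF refl])
  fix i
  show "coeff L i * poly L' z ^ i = (\<Sum>j\<le>degree L'. coeff L i * coeff L' j * z ^ (i * j))"
  proof (cases "coeff L i = 0")
    case False
    then obtain m where m: "i = p ^ m" using plin_coeff(1)[OF assms(3)] by blast
    have "poly L' z ^ i = poly L' (z ^ i)" using plin_frob[OF assms(1,2,4)] m by simp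
    then show ?thesis
      by (simp add: poly_altdef sum_distrib_left power_mult mult.assoc)
  qed simp
qed

lemma plin_comm:
  fixes L L' :: "'a::field poly"
  assumes "CHAR('a) = p" "prime p" "p_linearized p L" "p_linearized p L'"
  shows "poly L (poly L' z) = poly L' (poly L z)"
  unfolding plin_double[OF assms] plin_double[OF assms(1,2,4,3)]
  by (subst sum.swap) (simp add: mult.commute mult.left_commute)

lemma Fq_pow_mult:
  fixes x :: "'a::field"
  assumes "x ^ (p ^ n) = x"
  shows "x ^ (p ^ (n * q)) = x"
proof (induction q)
  case (Suc q)
  have "n * Suc q = n * q + n" by simp
    then have "x ^ (p ^ (n * Suc q)) = (x ^ (p ^ (n * q))) ^ (p ^ n)"
    by (metis power_add power_mult)
  then show ?case using Suc assms by simp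
qed simp

lemma Fq_pow_mod:
  fixes x :: "'a::field"
  assumes "x ^ (p ^ n) = x"
  shows "x ^ (p ^ m) = x ^ (p ^ (m mod n))"
proof -
  have "m = n * (m div n) + m mod n" by simp
  then have "x ^ (p ^ m) = (x ^ (p ^ (n * (m div n)))) ^ (p ^ (m mod n))"
    by (metis power_add power_mult)
  then show ?thesis using Fq_pow_mult[OF assms] by simp
qed

lemma bij_affine_mod:
  fixes n' c e :: nat
  assumes "coprime c n'"
  shows "bij_betw (\<lambda>i. (c * i + e) mod n') {..<n'} {..<n'}"
proof -
  have inj: "inj_on (\<lambda>i. (c * i + e) mod n') {..<n'}"
  proof (rule inj_onI)
    fix i j assume i: "i \<in> {..<n'}" and j: "j \<in> {..<n'}"
      and eq: "(c * i + e) mod n' = (c * j + e) mod n'"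
    then have "[c * i + e = c * j + e] (mod n')" by (simp add: cong_def)
    then have "[c * i = c * j] (mod n')" by (simp add: cong_add_rcancel_nat)
    then have "[i = j] (mod n')" using cong_mult_lcancel_nat[OF assms] by simp
    then show "i = j" using i j by (simp add: cong_def)
  qed
  have sub: "(\<lambda>i. (c * i + e) mod n') ` {..<n'} \<subseteq> {..<n'}"
  proof
    fix y assume "y \<in> (\<lambda>i. (c * i + e) mod n') ` {..<n'}"
    then obtain i where "i < n'" "y = (c * i + e) mod n'" by auto
    then show "y \<in> {..<n'}" by simp
  qed
  have "(\<lambda>i. (c * i + e) mod n') ` {..<n'} = {..<n'}"
    by (rule endo_inj_surj[OF finite_lessThan sub inj])
  then show ?thesis using inj by (simp add: bij_betw_def)
qed

lemma reindex_Fq: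
  fixes x :: "'a::field"
  assumes "x ^ (p ^ n) = x" "n = d * n'" "coprime c n'"
  shows "(\<Sum>i<n'. x ^ (p ^ (d * (c * i + e)))) = (\<Sum>i<n'. x ^ (p ^ (d * i)))"
proof -
  have "(\<Sum>i<n'. x ^ (p ^ (d * (c * i + e)))) = (\<Sum>i<n'. x ^ (p ^ (d * ((c * i + e) mod n'))))"
  proof (rule sum.cong[OF refl])
    fix i
    have md: "d * (c * i + e) mod n = d * ((c * i + e) mod n')"
      unfolding assms(2) by (rule mod_mult_mult1)
    show "x ^ (p ^ (d * (c * i + e))) = x ^ (p ^ (d * ((c * i + e) mod n')))"
      using Fq_pow_mod[OF assms(1), of "d * (c * i + e)"] unfolding md .
  qed
  also have "\<dots> = (\<Sum>i<n'. x ^ (p ^ (d * i)))"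
    by (rule sum.reindex_bij_betw[OF bij_affine_mod[OF assms(3), of e], of "\<lambda>j. x ^ (p ^ (d * j))"])
  finally show ?thesis .
qed

theorem theorem2:
  fixes p n k d :: nat and L L' :: "'a::field poly" and a \<delta> :: 'a
  assumes "prime p" and "CHAR('a) = p" and "alg_closed TYPE('a)"
    and "0 < n" and "0 < k" and "d = gcd n k" and "\<not> p dvd (k div d)"
    and "p_linearized p L" and "rsquarefree L"
    and "p_linearized p L'"
    and "pcompose L L' = [:0, 1:] - monom 1 (p ^ k)"
    and "a \<in> Fq (p ^ n)"
    and "\<delta> \<in> Fq (p ^ (2 * n))" and "S p n (2 * n) \<delta> = 1"
  shows "((\<exists>x \<in> Fq (p ^ n). poly L x = a) \<longleftrightarrow> poly L' (T p d n a) = 0)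
    \<and> (let x0 = inverse (of_nat (k div d)) * poly L' (T p k (lcm n k) (\<delta> * a))
       in poly L x0 = a \<and> (poly L' (T p d n a) = 0 \<longrightarrow> x0 \<in> Fq (p ^ n)))"
proof -
  note ch = assms(2,1)
  note pL = assms(8) and pL' = assms(10)
  define n' where "n' = n div d"
  define k' where "k' = k div d"
  have d0: "d > 0" using assms(4,6) by simp
  have n_eq: "n = d * n'" unfolding n'_def using assms(6) by simp
  have k_eq: "k = d * k'" unfolding k'_def using assms(6) by simp
  have n'0: "n' > 0" using n_eq assms(4) by (cases n') auto
  have cop: "coprime k' n'"
  proof -
    have "gcd n k = d * gcd n' k'" using n_eq k_eq by (simp add: gcd_mult_distrib_nat)
    then have "gcd n' k' = 1" using assms(4,6) d0 by auto
    then show ?thesis by (simp add: coprime_iff_gcd_eq_1 gcd.commute)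
  qed
  have lcm_eq: "lcm n k = k * n'"
  proof -
    have "d * lcm n k = n * k" using prod_gcd_lcm_nat[of n k] assms(6) by simp
    also have "\<dots> = d * (k * n')" using n_eq by simp
    finally show ?thesis using d0 by simp
  qed
  have lcmdiv: "lcm n k div k = n'" using lcm_eq assms(5) by simp
  have aF: "a ^ (p ^ n) = a" using assms(12) by (simp add: Fq_def)
  have Tdn: "T p d n a = (\<Sum>i<n'. a ^ (p ^ (d * i)))" unfolding T_def n'_def by simp
  define y where "y = T p k (lcm n k) (\<delta> * a)"
  have y_def': "y = (\<Sum>i<n'. (\<delta> * a) ^ (p ^ (k * i)))" unfolding y_def T_def lcmdiv by simp
  have k'0: "(of_nat k' :: 'a) \<noteq> 0"
    using assms(7) ch by (simp add: of_nat_eq_0_iff_char_dvd k'_def)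
  define c where "c = inverse (of_nat k' :: 'a)"
  have cfix: "c ^ (p ^ m) = c" for m
    unfolding c_def by (simp add: power_inverse frob_of_nat[OF ch])
  have cfix1: "c ^ p = c" using cfix[of 1] by simp
  have comp: "poly L (poly L' z) = z - z ^ (p ^ k)" for z
  proof -
    have "poly L (poly L' z) = poly (pcompose L L') z" by (simp add: poly_pcompose)
    then show ?thesis using assms(11) by (simp add: poly_monom)
  qed
  have F1: "\<delta> ^ (p ^ n) = \<delta> - 1"
  proof -
    have "S p n (2 * n) \<delta> = \<delta> - \<delta> ^ (p ^ n)"
      using assms(4) by (simp add: S_def numeral_2_eq_2)
    then show ?thesis using assms(14) by (simp add: algebra_simps)
  qed
  have F2: "\<delta> ^ (p ^ (n * m)) = \<delta> - of_nat m" for m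
  proof (induction m)
    case (Suc m)
    have "n * Suc m = n * m + n" by simp
    then have "\<delta> ^ (p ^ (n * Suc m)) = (\<delta> ^ (p ^ (n * m))) ^ (p ^ n)"
      by (metis power_add power_mult)
    also have "\<dots> = \<delta> ^ (p ^ n) - of_nat m" using Suc by (simp add: frob_diff[OF ch] frob_of_nat[OF ch])
    finally show ?case using F1 by simp
  qed simp
  have F3: "y - y ^ (p ^ k) = of_nat k' * a"
  proof -
    define f where "f i = (\<delta> * a) ^ (p ^ (k * i))" for i
    have "y ^ (p ^ k) = (\<Sum>i<n'. f (Suc i))"
      unfolding y_def' frob_sum[OF ch] f_def
      by (simp add: power_add mult.commute flip: power_mult)
    then have "y ^ (p ^ k) - y = f n' - f 0"
      unfolding y_def' f_def[symmetric] by (simp add: sum_lessThan_telescope sum_subtractf[symmetric])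
    moreover have "f 0 = \<delta> * a" by (simp add: f_def)
    moreover have "f n' = (\<delta> - of_nat k') * a"
    proof -
      have "k * n' = n * k'" using n_eq k_eq by simp
      then have "f n' = \<delta> ^ (p ^ (n * k')) * a ^ (p ^ (n * k'))"
        by (simp add: f_def power_mult_distrib)
      then show ?thesis using F2 Fq_pow_mult[OF aF] by simp
    qed
    ultimately show ?thesis by (simp add: algebra_simps)
  qed
  have F4: "poly L (c * poly L' y) = a"
  proof -
    have "poly L (c * poly L' y) = c * (y - y ^ (p ^ k))"
      using plin_smult[OF ch pL cfix1] comp by simp
    then show ?thesis using F3 k'0 by (simp add: c_def)
  qed
  have F5: "y ^ (p ^ n) = y - T p d n a"
  proof -
    have "y ^ (p ^ n) = (\<Sum>i<n'. (\<delta> ^ (p ^ (k * i)) - 1) * a ^ (p ^ (k * i)))"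
      unfolding y_def' frob_sum[OF ch]
    proof (rule sum.cong[OF refl])
      fix i
      have "((\<delta> * a) ^ (p ^ (k * i))) ^ (p ^ n) = ((\<delta> ^ (p ^ n)) * a ^ (p ^ n)) ^ (p ^ (k * i))"
        by (simp add: power_mult_distrib flip: power_mult) (simp add: mult.commute)
      also have "\<dots> = (\<delta> ^ (p ^ (k * i)) - 1) * a ^ (p ^ (k * i))"
        using F1 aF by (simp add: power_mult_distrib frob_diff[OF ch])
      finally show "((\<delta> * a) ^ (p ^ (k * i))) ^ (p ^ n) = (\<delta> ^ (p ^ (k * i)) - 1) * a ^ (p ^ (k * i))" .
    qed
    also have "\<dots> = y - (\<Sum>i<n'. a ^ (p ^ (k * i)))"
      unfolding y_def' by (simp add: algebra_simps power_mult_distrib sum_subtractf)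
    also have "(\<Sum>i<n'. a ^ (p ^ (k * i))) = T p d n a"
      using reindex_Fq[OF aF n_eq cop, of 0] unfolding Tdn by (simp add: k_eq mult.assoc)
    finally show ?thesis .
  qed
  have F6: "c * poly L' y \<in> Fq (p ^ n)" if "poly L' (T p d n a) = 0"
  proof -
    have "(c * poly L' y) ^ (p ^ n) = c * poly L' (y ^ (p ^ n))"
      by (simp add: power_mult_distrib cfix plin_frob[OF ch pL'])
    also have "\<dots> = c * poly L' y" using F5 that plin_diff[OF ch pL'] by simp
    finally show ?thesis by (simp add: Fq_def)
  qed
  have F7: "poly L' (T p d n a) = 0" if "x \<in> Fq (p ^ n)" "poly L x = a" for x
  proof -
    have xF: "x ^ (p ^ n) = x" using that by (simp add: Fq_def)
    define z where "z = (\<Sum>i<n'. x ^ (p ^ (d * i)))"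
    have "T p d n a = poly L z"
      unfolding Tdn z_def plin_sum[OF ch pL] using that(2) plin_frob[OF ch pL, symmetric] by simp
    then have "poly L' (T p d n a) = z - z ^ (p ^ k)"
      using comp plin_comm[OF ch pL pL'] by simp
    moreover have "z ^ (p ^ k) = z"
    proof -
      have "z ^ (p ^ k) = (\<Sum>i<n'. x ^ (p ^ (d * (1 * i + k'))))"
        unfolding z_def frob_sum[OF ch] by (simp add: k_eq power_add algebra_simps flip: power_mult)
      also have "\<dots> = z" unfolding z_def by (rule reindex_Fq[OF xF n_eq]) simp
      finally show ?thesis .
    qed
    ultimately show ?thesis by simp
  qed
  show ?thesis
    unfolding Let_def c_def[symmetric] k'_def[symmetric] y_def[symmetric]
    using F4 F6 F7 by blast
qed

end
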